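(* Let $\mathcal{M}=(S,s_I,\mathit{Act},V,\mathcal{P})$ be an affine parametric Markov decision process, let $T\subseteq S$ and $\lambda\in[0,1]$, and let $\varphi$ be the reachability specification "$T$ is reached with probability at most $\lambda$". Assume that for every $s,s'\in S$ and $\alpha\in A(s)$, $\mathcal{P}(s,\alpha,s')=2d_{s,\alpha,s'}\,y_{s,\alpha,s'}+c_{s,\alpha,s'}$ with $y_{s,\alpha,s'}\in V$ and constants $c_{s,\alpha,s'},d_{s,\alpha,s'}\in\mathbb{R}$. Fix constants $\varepsilon_{\mathrm{graph}}>0$ and $\tau>0$, and arbitrary reference values $\hat v\in\mathbb{R}$ ($v\in V$) and $\hat p_s\in\mathbb{R}$ ($s\in S$). For each triple $(s,\alpha,s')$ write $d=d_{s,\alpha,s'}$, $c=c_{s,\alpha,s'}$, $y=y_{s,\alpha,s'}$, $z=p_{s'}$, $\hat y=\widehat{y_{s,\alpha,s'}}$, $\hat z=\hat p_{s'}$, $\sigma=1$ if $d\ge0$ and $\sigma=-1$ otherwise, and set $h_{\mathrm{cvx}}(s,\alpha,s')=|d|(y+\sigma z)^2+c\,z$ and $h_{\mathrm{aff}}(s,\alpha,s')=-|d|(\hat y^2+\hat z^2)-2|d|\big(\hat y(y-\hat y)+\hat z(z-\hat z)\big)$. Consider the convex penalty problem in the real variables $v\in V$, $p_s\in[0,1]$ ($s\in S$) and $k_s$ ($s\in S\setminus T$): minimize $p_{s_I}+\tau\sum_{s\in S\setminus T}k_s$ subject to $p_s=1$ for all $s\in T$; $\mathcal{P}(s,\alpha,s')\ge\varepsilon_{\mathrm{graph}}$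 for all $s,s'\in S$ and $\alpha\in A(s)$ such that $\mathcal{P}(s,\alpha,s')$ is not the zero polynomial; $\sum_{s'\in S}\mathcal{P}(s,\alpha,s')=1$ for all $s\in S$ and $\alpha\in A(s)$; $\lambda\ge p_{s_I}$; $k_s+p_s\ge\sum_{s'\in S}\big(h_{\mathrm{cvx}}(s,\alpha,s')+h_{\mathrm{aff}}(s,\alpha,s')\big)$ for all $s\in S\setminus T$ and $\alpha\in A(s)$; $k_s\ge 0$ for all $s\in S\setminus T$. If $(\mathbf{v},\mathbf{p},\mathbf{k})$ is a feasible solution of this problem with $\tau\sum_{s\in S\setminus T}k_s=0$, then the parameter instantiation $\mathbf{v}$ is well-defined for $\mathcal{M}$ and $\mathcal{M}[\mathbf{v}]\models\varphi$.
   Context: A pMDP is a tuple $(S,s_I,\mathit{Act},V,\mathcal{P})$ with finite state set $S$, initial state $s_I$, finite action set $\mathit{Act}$, finite set $V$ of real-valued parameters, and transition function $\mathcal{P}:S\times\mathit{Act}\times S\to\mathbb{Q}[V]$ (polynomials over $V$); it is affine if every $\mathcal{P}(s,\alpha,s')$ is affine in the parameters. $A(s)=\{\alpha\mid\exists s'.\ \mathcal{P}(s,\alpha,s')\ne0\}$ is the nonempty set of enabled actions at $s$. An instantiation $\mathbf{v}:V\to\mathbb{R}$ yields $\mathcal{M}[\mathbf{v}]$ by evaluating each polynomial at $\mathbf{v}$; it is well-defined if $\mathcal{M}[\mathbf{v}]$ is a Markov decision process, i.e. all $\mathcal{P}(s,\alpha,s')[\mathbf{v}]\in[0,1]$ and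 $\sum_{s'}\mathcal{P}(s,\alpha,s')[\mathbf{v}]=1$ for all $s$ and $\alpha\in A(s)$. A (memoryless deterministic) strategy is a map $\sigma:S\to\mathit{Act}$ with $\sigma(s)\in A(s)$; it induces a Markov chain. $\mathcal{M}[\mathbf{v}]\models\varphi$ means that for every strategy $\sigma$, the probability of eventually reaching $T$ from $s_I$ in the Markov chain induced by $\sigma$ on $\mathcal{M}[\mathbf{v}]$ is at most $\lambda$. *)

theory Defs
  imports Complex_Main
begin

(* An affine pMDP whose transition polynomials have the shape
   P(s,a,s') = 2 d(s,a,s') * y(s,a,s') + c(s,a,s') is represented by the
   coefficient data d, c :: 's => 'a => 's => real and the parameter
   map y :: 's => 'a => 's => 'v. *)

definition trans_eval ::
  "('s \<Rightarrow> 'a \<Rightarrow> 's \<Rightarrow> real) \<Rightarrow> ('s \<Rightarrow> 'a \<Rightarrow> 's \<Rightarrow> 'v) \<Rightarrow>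
   ('s \<Rightarrow> 'a \<Rightarrow> 's \<Rightarrow> real) \<Rightarrow> ('v \<Rightarrow> real) \<Rightarrow> 's \<Rightarrow> 'a \<Rightarrow> 's \<Rightarrow> real" where
  "trans_eval d y c v s a s' = 2 * d s a s' * v (y s a s') + c s a s'"

definition nonzero_poly ::
  "('s \<Rightarrow> 'a \<Rightarrow> 's \<Rightarrow> real) \<Rightarrow> ('s \<Rightarrow> 'a \<Rightarrow> 's \<Rightarrow> real) \<Rightarrow> 's \<Rightarrow> 'a \<Rightarrow> 's \<Rightarrow> bool" where
  "nonzero_poly d c s a s' \<longleftrightarrow> d s a s' \<noteq> 0 \<or> c s a s' \<noteq> 0"

definition enabled ::
  "'s set \<Rightarrow> 'a set \<Rightarrow> ('s \<Rightarrow> 'a \<Rightarrow> 's \<Rightarrow> real) \<Rightarrow> ('s \<Rightarrow> 'a \<Rightarrow> 's \<Rightarrow> real) \<Rightarrow> 's \<Rightarrow> 'a set" where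
  "enabled S Act d c s = {a \<in> Act. \<exists>s'\<in>S. nonzero_poly d c s a s'}"

definition well_defined ::
  "'s set \<Rightarrow> 'a set \<Rightarrow> ('s \<Rightarrow> 'a \<Rightarrow> 's \<Rightarrow> real) \<Rightarrow> ('s \<Rightarrow> 'a \<Rightarrow> 's \<Rightarrow> 'v) \<Rightarrow>
   ('s \<Rightarrow> 'a \<Rightarrow> 's \<Rightarrow> real) \<Rightarrow> ('v \<Rightarrow> real) \<Rightarrow> bool" where
  "well_defined S Act d y c v \<longleftrightarrow>
     (\<forall>s\<in>S. \<forall>a\<in>enabled S Act d c s.
        (\<forall>s'\<in>S. 0 \<le> trans_eval d y c v s a s' \<and> trans_eval d y c v s a s' \<le> 1) \<and>
        (\<Sum>s'\<in>S. trans_eval d y c v s a s') = 1)"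

fun reach_within :: "'s set \<Rightarrow> ('s \<Rightarrow> 's \<Rightarrow> real) \<Rightarrow> 's set \<Rightarrow> nat \<Rightarrow> 's \<Rightarrow> real" where
  "reach_within S P T 0 s = (if s \<in> T then 1 else 0)"
| "reach_within S P T (Suc n) s =
     (if s \<in> T then 1 else (\<Sum>s'\<in>S. P s s' * reach_within S P T n s'))"

definition reach_prob :: "'s set \<Rightarrow> ('s \<Rightarrow> 's \<Rightarrow> real) \<Rightarrow> 's set \<Rightarrow> 's \<Rightarrow> real" where
  "reach_prob S P T s = (SUP n. reach_within S P T n s)"

definition induced_mc ::
  "('s \<Rightarrow> 'a \<Rightarrow> 's \<Rightarrow> real) \<Rightarrow> ('s \<Rightarrow> 'a \<Rightarrow> 's \<Rightarrow> 'v) \<Rightarrow>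
   ('s \<Rightarrow> 'a \<Rightarrow> 's \<Rightarrow> real) \<Rightarrow> ('v \<Rightarrow> real) \<Rightarrow> ('s \<Rightarrow> 'a) \<Rightarrow> 's \<Rightarrow> 's \<Rightarrow> real" where
  "induced_mc d y c v \<sigma> s s' = trans_eval d y c v s (\<sigma> s) s'"

definition satisfies ::
  "'s set \<Rightarrow> 's \<Rightarrow> 'a set \<Rightarrow> ('s \<Rightarrow> 'a \<Rightarrow> 's \<Rightarrow> real) \<Rightarrow> ('s \<Rightarrow> 'a \<Rightarrow> 's \<Rightarrow> 'v) \<Rightarrow>
   ('s \<Rightarrow> 'a \<Rightarrow> 's \<Rightarrow> real) \<Rightarrow> ('v \<Rightarrow> real) \<Rightarrow> 's set \<Rightarrow> real \<Rightarrow> bool" where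
  "satisfies S sI Act d y c v T lam \<longleftrightarrow>
     (\<forall>\<sigma>. (\<forall>s\<in>S. \<sigma> s \<in> enabled S Act d c s) \<longrightarrow>
        reach_prob S (induced_mc d y c v \<sigma>) T sI \<le> lam)"

definition sgn_d :: "real \<Rightarrow> real" where
  "sgn_d x = (if x \<ge> 0 then 1 else -1)"

definition h_cvx ::
  "('s \<Rightarrow> 'a \<Rightarrow> 's \<Rightarrow> real) \<Rightarrow> ('s \<Rightarrow> 'a \<Rightarrow> 's \<Rightarrow> 'v) \<Rightarrow> ('s \<Rightarrow> 'a \<Rightarrow> 's \<Rightarrow> real) \<Rightarrow>
   ('v \<Rightarrow> real) \<Rightarrow> ('s \<Rightarrow> real) \<Rightarrow> 's \<Rightarrow> 'a \<Rightarrow> 's \<Rightarrow> real" where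
  "h_cvx d y c v p s a s' =
     \<bar>d s a s'\<bar> * (v (y s a s') + sgn_d (d s a s') * p s')^2 + c s a s' * p s'"

definition h_aff ::
  "('s \<Rightarrow> 'a \<Rightarrow> 's \<Rightarrow> real) \<Rightarrow> ('s \<Rightarrow> 'a \<Rightarrow> 's \<Rightarrow> 'v) \<Rightarrow> ('v \<Rightarrow> real) \<Rightarrow> ('s \<Rightarrow> real) \<Rightarrow>
   ('v \<Rightarrow> real) \<Rightarrow> ('s \<Rightarrow> real) \<Rightarrow> 's \<Rightarrow> 'a \<Rightarrow> 's \<Rightarrow> real" where
  "h_aff d y vhat phat v p s a s' =
     - \<bar>d s a s'\<bar> * ((vhat (y s a s'))^2 + (phat s')^2)
     - 2 * \<bar>d s a s'\<bar> * (vhat (y s a s') * (v (y s a s') - vhat (y s a s'))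
                          + phat s' * (p s' - phat s'))"

definition feasible ::
  "'s set \<Rightarrow> 's \<Rightarrow> 'a set \<Rightarrow> ('s \<Rightarrow> 'a \<Rightarrow> 's \<Rightarrow> real) \<Rightarrow> ('s \<Rightarrow> 'a \<Rightarrow> 's \<Rightarrow> 'v) \<Rightarrow>
   ('s \<Rightarrow> 'a \<Rightarrow> 's \<Rightarrow> real) \<Rightarrow> 's set \<Rightarrow> real \<Rightarrow> real \<Rightarrow> ('v \<Rightarrow> real) \<Rightarrow> ('s \<Rightarrow> real) \<Rightarrow>
   ('v \<Rightarrow> real) \<Rightarrow> ('s \<Rightarrow> real) \<Rightarrow> ('s \<Rightarrow> real) \<Rightarrow> bool" where
  "feasible S sI Act d y c T lam eps vhat phat v p k \<longleftrightarrow>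
     (\<forall>s\<in>S. 0 \<le> p s \<and> p s \<le> 1) \<and>
     (\<forall>s\<in>T. p s = 1) \<and>
     (\<forall>s\<in>S. \<forall>a\<in>enabled S Act d c s. \<forall>s'\<in>S.
        nonzero_poly d c s a s' \<longrightarrow> trans_eval d y c v s a s' \<ge> eps) \<and>
     (\<forall>s\<in>S. \<forall>a\<in>enabled S Act d c s. (\<Sum>s'\<in>S. trans_eval d y c v s a s') = 1) \<and>
     lam \<ge> p sI \<and>
     (\<forall>s\<in>S - T. \<forall>a\<in>enabled S Act d c s.
        k s + p s \<ge> (\<Sum>s'\<in>S. h_cvx d y c v p s a s' + h_aff d y vhat phat v p s a s')) \<and>
     (\<forall>s\<in>S - T. k s \<ge> 0)"

end

theory Submission
  imports Defs
begin

lemma h_bound: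
  "h_cvx d y c v p s a s' + h_aff d y vhat phat v p s a s' \<ge> trans_eval d y c v s a s' * p s'"
proof -
  define D where "D = d s a s'"
  define Y where "Y = v (y s a s')"
  define Z where "Z = p s'"
  define y0 where "y0 = vhat (y s a s')"
  define z0 where "z0 = phat s'"
  define C where "C = c s a s'"
  have eq: "h_cvx d y c v p s a s' + h_aff d y vhat phat v p s a s'
      = 2 * D * Y * Z + C * Z + \<bar>D\<bar> * ((Y - y0)^2 + (Z - z0)^2)"
  proof (cases "D \<ge> 0")
    case True
    then show ?thesis unfolding h_cvx_def h_aff_def D_def[symmetric] Y_def[symmetric] Z_def[symmetric]
        y0_def[symmetric] z0_def[symmetric] C_def[symmetric]
      by (simp add: sgn_d_def power2_eq_square algebra_simps)
  next
    case False
    then show ?thesis unfolding h_cvx_def h_aff_def D_def[symmetric] Y_def[symmetric] Z_def[symmetric]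
        y0_def[symmetric] z0_def[symmetric] C_def[symmetric]
      by (simp add: sgn_d_def power2_eq_square algebra_simps)
  qed
  have "0 \<le> \<bar>D\<bar> * ((Y - y0)^2 + (Z - z0)^2)" by simp
  then show ?thesis unfolding eq trans_eval_def D_def[symmetric] Y_def[symmetric] Z_def[symmetric] C_def[symmetric]
    by (simp add: algebra_simps)
qed

theorem theorem1:
  fixes S :: "'s set" and sI :: 's and Act :: "'a set" and V :: "'v set"
    and d c :: "'s \<Rightarrow> 'a \<Rightarrow> 's \<Rightarrow> real" and y :: "'s \<Rightarrow> 'a \<Rightarrow> 's \<Rightarrow> 'v"
    and T :: "'s set" and lam eps tau :: real
    and vhat :: "'v \<Rightarrow> real" and phat :: "'s \<Rightarrow> real"
    and v :: "'v \<Rightarrow> real" and p k :: "'s \<Rightarrow> real"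
  assumes "finite S" and "finite Act" and "finite V" and "sI \<in> S"
    and "\<forall>s\<in>S. enabled S Act d c s \<noteq> {}"
    and "\<forall>s\<in>S. \<forall>a\<in>enabled S Act d c s. \<forall>s'\<in>S. y s a s' \<in> V"
    and "T \<subseteq> S" and "0 \<le> lam" and "lam \<le> 1"
    and "eps > 0" and "tau > 0"
    and "feasible S sI Act d y c T lam eps vhat phat v p k"
    and "tau * (\<Sum>s\<in>S - T. k s) = 0"
  shows "well_defined S Act d y c v \<and> satisfies S sI Act d y c v T lam"
proof -
  note F = assms(12)[unfolded feasible_def]
  have fin: "finite S" by fact
  have ksum: "(\<Sum>s\<in>S - T. k s) = 0" using assms(11,13) by simp
  have k0: "\<forall>s\<in>S - T. k s = 0"
    using sum_nonneg_eq_0_iff[of "S - T" k] ksum F fin by auto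
  have nonneg: "0 \<le> trans_eval d y c v s a s'" if "s \<in> S" "a \<in> enabled S Act d c s" "s' \<in> S" for s a s'
  proof (cases "nonzero_poly d c s a s'")
    case True then show ?thesis using F that assms(10) by force
  next
    case False then show ?thesis by (simp add: nonzero_poly_def trans_eval_def)
  qed
  have sum1: "(\<Sum>s'\<in>S. trans_eval d y c v s a s') = 1" if "s \<in> S" "a \<in> enabled S Act d c s" for s a
    using F that by blast
  have le1: "trans_eval d y c v s a s' \<le> 1" if "s \<in> S" "a \<in> enabled S Act d c s" "s' \<in> S" for s a s'
  proof -
    have "trans_eval d y c v s a s' \<le> (\<Sum>s'\<in>S. trans_eval d y c v s a s')"
      by (rule member_le_sum) (use that nonneg fin in auto)
    then show ?thesis using sum1 that by simp
  qed
  have wd: "well_defined S Act d y c v"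
    unfolding well_defined_def using nonneg le1 sum1 by blast
  have step: "(\<Sum>s'\<in>S. trans_eval d y c v s a s' * p s') \<le> p s"
    if "s \<in> S - T" "a \<in> enabled S Act d c s" for s a
  proof -
    have "(\<Sum>s'\<in>S. trans_eval d y c v s a s' * p s')
        \<le> (\<Sum>s'\<in>S. h_cvx d y c v p s a s' + h_aff d y vhat phat v p s a s')"
      by (rule sum_mono) (rule h_bound)
    also have "\<dots> \<le> k s + p s" using F that by blast
    finally show ?thesis using k0 that by simp
  qed
  have sat: "satisfies S sI Act d y c v T lam"
    unfolding satisfies_def
  proof (intro allI impI)
    fix \<sigma> assume sig: "\<forall>s\<in>S. \<sigma> s \<in> enabled S Act d c s"
    have bound: "\<forall>s\<in>S. reach_within S (induced_mc d y c v \<sigma>) T n s \<le> p s" for n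
    proof (induction n)
      case 0 then show ?case using F by auto
    next
      case (Suc n)
      show ?case
      proof
        fix s assume s: "s \<in> S"
        show "reach_within S (induced_mc d y c v \<sigma>) T (Suc n) s \<le> p s"
        proof (cases "s \<in> T")
          case True then show ?thesis using F by simp
        next
          case False
          have "(\<Sum>s'\<in>S. induced_mc d y c v \<sigma> s s' * reach_within S (induced_mc d y c v \<sigma>) T n s')
              \<le> (\<Sum>s'\<in>S. induced_mc d y c v \<sigma> s s' * p s')"
          proof (rule sum_mono, rule mult_left_mono)
            fix s' assume "s' \<in> S"
            then show "reach_within S (induced_mc d y c v \<sigma>) T n s' \<le> p s'" using Suc.IH by blast
            show "0 \<le> induced_mc d y c v \<sigma> s s'" unfolding induced_mc_def
              using nonneg sig s \<open>s' \<in> S\<close> by blast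
          qed
          also have "\<dots> \<le> p s" using step[of s "\<sigma> s"] False s sig by (simp add: induced_mc_def)
          finally show ?thesis using False by simp
        qed
      qed
    qed
    have "reach_prob S (induced_mc d y c v \<sigma>) T sI \<le> p sI"
      unfolding reach_prob_def by (rule cSUP_least) (use bound assms(4) in auto)
    then show "reach_prob S (induced_mc d y c v \<sigma>) T sI \<le> lam" using F by linarith
  qed
  show ?thesis using wd sat by blast
qed

end
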